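(* Let $(E,B,p,\Gamma)$ be a compact graph bundle and $M\subseteq E$ a compact set. If $\operatorname{End}_s(M)=M$, then $M$ is nowhere dense in $E$.
   Context: Compact graph bundle $(E,B,p,\Gamma)$: $E,B$ compact metric, $\Gamma$ a graph (finite union of arcs pairwise disjoint or meeting only at end-points), $p:E\to B$ continuous surjection, locally trivial via homeomorphisms $h:p^{-1}(U)\to U\times\Gamma$ with $\mathrm{pr}_1\circ h=p$ (canonical). Open $n$-star $\Sigma_n$: $n$-star minus its $n$ end-points. Full sub-star: for $N\ge n\ge2$, an open star $\Sigma_n\subseteq\Sigma_N$ with the same central point that is the union of $n$ of the $N$ half-closed branches of $\Sigma_N$. For $E=B\times\Gamma$, $p=\mathrm{pr}_1$, $M$ closed: $x=(x_1,x_2)\in M$ is a strongly star-like interior point if $\operatorname{ord}(x_2,\Gamma)=N\ge2$ and there exist open $O\ni x_1$ in $B$ and an open $N$-star $\Sigma_N\subseteq\Gamma$, an open neighbourhood of $x_2$ with central point $x_2$, with $\mathcal G=M\cap(O\times\Sigma_N)$ satisfying $\mathcal G\cap(\{x_1\}\times\Gamma)=\{x_1\}\times\Sigma_k$, $k\ge2$, $\Sigma_k$ a full sub-star of $\Sigma_N$, and for every $z\in p(\mathcal G)$, $\mathcal G\cap(\{z\}\times\Gamma)=\{z\}\times\Sigma_{k(z),z}$, $2\le k(z)\le k$, $\Sigma_{k(z),z}$ a full sub-star of $\Sigma_k$; in general bundles transferred via canonical homeomorphisms. $\operatorname{Lint}_s(M)$ is the set of such points and $\operatorname{End}_s(M)=M\setminus\operatorname{Lint}_s(M)$.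 *)

theory Defs
  imports "HOL-Analysis.Analysis"
begin

definition is_graph :: "'a::metric_space set \<Rightarrow> bool" where
  "is_graph \<Gamma> \<longleftrightarrow> (\<exists>n::nat. \<exists>g::nat \<Rightarrow> real \<Rightarrow> 'a. n \<ge> 1 \<and>
     (\<forall>i<n. arc (g i)) \<and> \<Gamma> = (\<Union>i<n. path_image (g i)) \<and>
     (\<forall>i<n. \<forall>j<n. i \<noteq> j \<longrightarrow>
        path_image (g i) \<inter> path_image (g j)
          \<subseteq> {pathstart (g i), pathfinish (g i)} \<inter> {pathstart (g j), pathfinish (g j)}))"

definition ord_le :: "'a::metric_space set \<Rightarrow> 'a \<Rightarrow> nat \<Rightarrow> bool" where
  "ord_le X x n \<longleftrightarrow> (\<forall>U. openin (top_of_set X) U \<and> x \<in> U \<longrightarrow>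
     (\<exists>V. openin (top_of_set X) V \<and> x \<in> V \<and> V \<subseteq> U \<and>
          finite ((top_of_set X) frontier_of V) \<and> card ((top_of_set X) frontier_of V) \<le> n))"

definition point_order :: "'a::metric_space set \<Rightarrow> 'a \<Rightarrow> nat \<Rightarrow> bool" where
  "point_order X x N \<longleftrightarrow> ord_le X x N \<and> (\<forall>m<N. \<not> ord_le X x m)"

definition open_star_branches :: "'a::metric_space \<Rightarrow> 'a set set \<Rightarrow> bool" where
  "open_star_branches c bs \<longleftrightarrow> finite bs \<and>
     (\<exists>g :: 'a set \<Rightarrow> real \<Rightarrow> 'a.
        (\<forall>b\<in>bs. arc (g b) \<and> pathstart (g b) = c \<and> b = path_image (g b) - {pathfinish (g b)}) \<and>
        (\<forall>b\<in>bs. \<forall>b'\<in>bs. b \<noteq> b' \<longrightarrow> path_image (g b) \<inter> path_image (g b') = {c}))"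

definition is_open_star :: "'a::metric_space \<Rightarrow> nat \<Rightarrow> 'a set \<Rightarrow> bool" where
  "is_open_star c n S \<longleftrightarrow> (\<exists>bs. open_star_branches c bs \<and> card bs = n \<and> S = \<Union>bs)"

definition full_substar :: "'a::metric_space \<Rightarrow> nat \<Rightarrow> 'a set \<Rightarrow> 'a set \<Rightarrow> bool" where
  "full_substar c n S' S \<longleftrightarrow> (\<exists>bs bs'. open_star_branches c bs \<and> S = \<Union>bs \<and>
      bs' \<subseteq> bs \<and> card bs' = n \<and> S' = \<Union>bs')"

definition ssl_point :: "'b::metric_space set \<Rightarrow> 'g::metric_space set \<Rightarrow> ('b \<times> 'g) set \<Rightarrow> 'b \<times> 'g \<Rightarrow> bool" where
  "ssl_point B \<Gamma> M x \<longleftrightarrow> x \<in> M \<and>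
     (\<exists>N. N \<ge> 2 \<and> point_order \<Gamma> (snd x) N \<and>
       (\<exists>Ob \<Sigma>N. openin (top_of_set B) Ob \<and> fst x \<in> Ob \<and>
          \<Sigma>N \<subseteq> \<Gamma> \<and> openin (top_of_set \<Gamma>) \<Sigma>N \<and> snd x \<in> \<Sigma>N \<and> is_open_star (snd x) N \<Sigma>N \<and>
          (let G = M \<inter> (Ob \<times> \<Sigma>N) in
            \<exists>k \<Sigma>k. k \<ge> 2 \<and> full_substar (snd x) k \<Sigma>k \<Sigma>N \<and>
              G \<inter> ({fst x} \<times> \<Gamma>) = {fst x} \<times> \<Sigma>k \<and>
              (\<forall>z \<in> fst ` G. \<exists>kz \<Sigma>z. 2 \<le> kz \<and> kz \<le> k \<and> full_substar (snd x) kz \<Sigma>z \<Sigma>k \<and>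
                  G \<inter> ({z} \<times> \<Gamma>) = {z} \<times> \<Sigma>z))))"

definition bundle_chart ::
  "'e::metric_space set \<Rightarrow> 'b::metric_space set \<Rightarrow> ('e \<Rightarrow> 'b) \<Rightarrow> 'g::metric_space set \<Rightarrow> 'b set \<Rightarrow> ('e \<Rightarrow> 'b \<times> 'g) \<Rightarrow> bool" where
  "bundle_chart E B p \<Gamma> U h \<longleftrightarrow> openin (top_of_set B) U \<and>
     (\<exists>k. homeomorphism (E \<inter> p -` U) (U \<times> \<Gamma>) h k) \<and>
     (\<forall>e \<in> E \<inter> p -` U. fst (h e) = p e)"

definition compact_graph_bundle ::
  "'e::metric_space set \<Rightarrow> 'b::metric_space set \<Rightarrow> ('e \<Rightarrow> 'b) \<Rightarrow> 'g::metric_space set \<Rightarrow> bool" where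
  "compact_graph_bundle E B p \<Gamma> \<longleftrightarrow> compact E \<and> compact B \<and> is_graph \<Gamma> \<and>
     continuous_on E p \<and> p ` E = B \<and>
     (\<forall>b\<in>B. \<exists>U h. b \<in> U \<and> bundle_chart E B p \<Gamma> U h)"

definition Lint_s ::
  "'e::metric_space set \<Rightarrow> 'b::metric_space set \<Rightarrow> ('e \<Rightarrow> 'b) \<Rightarrow> 'g::metric_space set \<Rightarrow> 'e set \<Rightarrow> 'e set" where
  "Lint_s E B p \<Gamma> M = {x \<in> M. \<exists>U h. p x \<in> U \<and> bundle_chart E B p \<Gamma> U h \<and>
       ssl_point U \<Gamma> (h ` (M \<inter> p -` U)) (h x)}"

definition End_s ::
  "'e::metric_space set \<Rightarrow> 'b::metric_space set \<Rightarrow> ('e \<Rightarrow> 'b) \<Rightarrow> 'g::metric_space set \<Rightarrow> 'e set \<Rightarrow> 'e set" where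
  "End_s E B p \<Gamma> M = M - Lint_s E B p \<Gamma> M"

definition nowhere_dense_in :: "'a::topological_space set \<Rightarrow> 'a set \<Rightarrow> bool" where
  "nowhere_dense_in E M \<longleftrightarrow> (top_of_set E) interior_of ((top_of_set E) closure_of M) = {}"

end

theory Submission
  imports Defs
begin

lemma sub_arc:
  fixes g :: "real \<Rightarrow> 'a::topological_space"
  assumes "arc g" "u \<in> {0..1}" "v \<in> {0..1}" "u \<noteq> v"
  shows "arc (\<lambda>x. g((v-u)*x+u))" "path_image (\<lambda>x. g((v-u)*x+u)) = g ` closed_segment u v"
    "pathstart (\<lambda>x. g((v-u)*x+u)) = g u" "pathfinish (\<lambda>x. g((v-u)*x+u)) = g v"
proof -
  have seg: "closed_segment u v \<subseteq> {0..1}"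
    using assms by (auto simp: closed_segment_eq_real_ivl)
  have im: "(\<lambda>x. (v - u) * x + u) ` {0..1} = closed_segment u v"
    by (simp add: closed_segment_real_eq)
  have cg: "continuous_on {0..1} g" using assms(1) arc_imp_path path_def by blast
  have "continuous_on {0..1} (\<lambda>x. g((v-u)*x+u))"
  proof (rule continuous_on_compose2[OF cg])
    show "continuous_on {0..1} (\<lambda>x. (v - u) * x + u)" by (intro continuous_intros)
    show "(\<lambda>x. (v - u) * x + u) ` {0..1} \<subseteq> {0..1}" using im seg by simp
  qed
  moreover have "inj_on (\<lambda>x. g((v-u)*x+u)) {0..1}"
  proof (rule inj_onI)
    fix x y :: real assume xy: "x \<in> {0..1}" "y \<in> {0..1}" "g ((v-u)*x+u) = g((v-u)*y+u)"
    have "(v-u)*x+u \<in> {0..1}" "(v-u)*y+u \<in> {0..1}"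
      using xy(1,2) seg im by blast+
    then have "(v-u)*x+u = (v-u)*y+u" using arc_imp_inj_on[OF assms(1)] xy(3) inj_onD by metis
    then show "x = y" using assms(4) by simp
  qed
  ultimately show "arc (\<lambda>x. g((v-u)*x+u))" by (simp add: arc_def path_def)
  show "path_image (\<lambda>x. g((v-u)*x+u)) = g ` closed_segment u v"
    unfolding path_image_def im[symmetric] by (simp add: image_image)
  show "pathstart (\<lambda>x. g((v-u)*x+u)) = g u" "pathfinish (\<lambda>x. g((v-u)*x+u)) = g v"
    by (auto simp: pathstart_def pathfinish_def)
qed

lemma arc_not_other:
  fixes g :: "nat \<Rightarrow> real \<Rightarrow> 'a::metric_space"
  assumes arcs: "\<forall>i<n. arc (g i)"
   and P: "\<forall>i<n. \<forall>j<n. i \<noteq> j \<longrightarrow> path_image (g i) \<inter> path_image (g j) \<subseteq> {pathstart (g i), pathfinish (g i)} \<inter> {pathstart (g j), pathfinish (g j)}"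
   and i: "i<n" and j: "j < n" "j \<noteq> i" and t: "0 < t" "t < 1"
  shows "g i t \<notin> path_image (g j)"
proof
  assume "g i t \<in> path_image (g j)"
  moreover have "g i t \<in> path_image (g i)" using t by (auto simp: path_image_def)
  ultimately have "g i t \<in> {g i 0, g i 1}" using P i j by (auto simp: pathstart_def pathfinish_def)
  moreover have "inj_on (g i) {0..1}" using arcs i arc_imp_inj_on by blast
  ultimately show False using t by (auto dest: inj_onD)
qed

lemma arc_interior_open:
  fixes g :: "nat \<Rightarrow> real \<Rightarrow> 'a::metric_space"
  assumes arcs: "\<forall>i<n. arc (g i)" and G: "\<Gamma> = (\<Union>i<n. path_image (g i))"
   and P: "\<forall>i<n. \<forall>j<n. i \<noteq> j \<longrightarrow> path_image (g i) \<inter> path_image (g j) \<subseteq> {pathstart (g i), pathfinish (g i)} \<inter> {pathstart (g j), pathfinish (g j)}"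
   and i: "i<n" and cd: "0 < c" "c < d" "d < 1"
  shows "openin (top_of_set \<Gamma>) (g i ` {c<..<d})"
proof -
  define C where "C = (\<Union>j\<in>{j. j<n \<and> j\<noteq>i}. path_image (g j)) \<union> g i ` {0..c} \<union> g i ` {d..1}"
  have ci: "continuous_on {0..1} (g i)" using arcs i arc_imp_path path_def by blast
  have inj: "inj_on (g i) {0..1}" using arcs i arc_imp_inj_on by blast
  have "compact C"
    unfolding C_def
  proof (intro compact_Un compact_UN)
    show "finite {j. j < n \<and> j \<noteq> i}" by simp
    show "compact (path_image (g j))" if "j \<in> {j. j < n \<and> j \<noteq> i}" for j
      using that arcs compact_arc_image by blast
    show "compact (g i ` {0..c})"
      by (rule compact_continuous_image[OF continuous_on_subset[OF ci]]) (use cd in auto)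
    show "compact (g i ` {d..1})"
      by (rule compact_continuous_image[OF continuous_on_subset[OF ci]]) (use cd in auto)
  qed
  then have "closed C" by (rule compact_imp_closed)
  then have op: "openin (top_of_set \<Gamma>) (\<Gamma> \<inter> - C)" by (intro openin_open_Int) auto
  have "\<Gamma> \<inter> - C = g i ` {c<..<d}"
  proof
    show "\<Gamma> \<inter> - C \<subseteq> g i ` {c<..<d}"
    proof
      fix z assume z: "z \<in> \<Gamma> \<inter> - C"
      then obtain j where j: "j<n" "z \<in> path_image (g j)" using G by auto
      have "j = i" using z j unfolding C_def by auto
      then obtain t where t: "t \<in> {0..1}" "z = g i t" using j by (auto simp: path_image_def)
      have "t \<notin> {0..c}" "t \<notin> {d..1}" using z t unfolding C_def by auto
      then show "z \<in> g i ` {c<..<d}" using t by auto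
    qed
    show "g i ` {c<..<d} \<subseteq> \<Gamma> \<inter> - C"
    proof
      fix z assume "z \<in> g i ` {c<..<d}"
      then obtain t where t: "c < t" "t < d" "z = g i t" by auto
      have "z \<in> path_image (g i)" using t cd by (auto simp: path_image_def)
      then have "z \<in> \<Gamma>" using G i by auto
      moreover have "z \<notin> path_image (g j)" if "j<n" "j\<noteq>i" for j
        using arc_not_other[OF arcs P i that] t cd by auto
      moreover have "z \<notin> g i ` {0..c}"
      proof
        assume "z \<in> g i ` {0..c}"
        then obtain s where "s \<in> {0..c}" "g i t = g i s" using t by auto
        then show False using inj t cd by (auto dest: inj_onD)
      qed
      moreover have "z \<notin> g i ` {d..1}"
      proof
        assume "z \<in> g i ` {d..1}"
        then obtain s where "s \<in> {d..1}" "g i t = g i s" using t by auto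
        then show False using inj t cd by (auto dest: inj_onD)
      qed
      ultimately show "z \<in> \<Gamma> \<inter> - C" unfolding C_def by auto
    qed
  qed
  then show ?thesis using op by simp
qed

lemma small_interval:
  fixes \<gamma> :: "real \<Rightarrow> 'a::metric_space"
  assumes "arc \<gamma>" "0 < t0" "t0 < 1" "open Ov" "\<gamma> t0 \<in> Ov"
  shows "\<exists>e>0. 0 < t0 - e \<and> t0 + e < 1 \<and> \<gamma> ` {t0-e..t0+e} \<subseteq> Ov"
proof -
  have ci: "continuous_on {0..1} \<gamma>" using assms(1) arc_imp_path path_def by blast
  then have "continuous_on {0<..<1} \<gamma>" by (rule continuous_on_subset) auto
  then have "open ({0<..<1} \<inter> \<gamma> -` Ov)" using assms(4) by (intro continuous_open_preimage) auto
  moreover have "t0 \<in> {0<..<1} \<inter> \<gamma> -` Ov" using assms by auto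
  ultimately obtain r where r: "r > 0" "ball t0 r \<subseteq> {0<..<1} \<inter> \<gamma> -` Ov"
    using open_contains_ball by blast
  define e where "e = min (r/2) (min (t0/2) ((1-t0)/2))"
  have e: "e > 0" "e < r" "e \<le> t0/2" "e \<le> (1-t0)/2" using r assms unfolding e_def by (auto simp: min_def)
  have "{t0-e..t0+e} \<subseteq> ball t0 r" using e by (auto simp: dist_real_def)
  then have "\<gamma> ` {t0-e..t0+e} \<subseteq> Ov" using r by auto
  then show ?thesis using e assms by (intro exI[of _ e]) auto
qed

lemma star2:
  fixes \<gamma> :: "real \<Rightarrow> 'a::metric_space"
  assumes arc: "arc \<gamma>" and ab: "0 < a" "a < t0" "t0 < b" "b < 1"
  shows "is_open_star (\<gamma> t0) 2 (\<gamma> ` {a<..<b})"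
proof -
  have inj: "inj_on \<gamma> {0..1}" using arc arc_imp_inj_on by blast
  define g1 where "g1 = (\<lambda>x. \<gamma>((b-t0)*x+t0))"
  define g2 where "g2 = (\<lambda>x. \<gamma>((a-t0)*x+t0))"
  have a1: "arc g1" "path_image g1 = \<gamma> ` {t0..b}" "pathstart g1 = \<gamma> t0" "pathfinish g1 = \<gamma> b"
    using sub_arc[OF arc, of t0 b] ab unfolding g1_def by (auto simp: closed_segment_eq_real_ivl)
  have a2: "arc g2" "path_image g2 = \<gamma> ` {a..t0}" "pathstart g2 = \<gamma> t0" "pathfinish g2 = \<gamma> a"
    using sub_arc[OF arc, of t0 a] ab unfolding g2_def by (auto simp: closed_segment_eq_real_ivl)
  define b1 where "b1 = \<gamma> ` {t0..<b}"
  define b2 where "b2 = \<gamma> ` {a<..t0}"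
  have e1: "b1 = path_image g1 - {pathfinish g1}"
  proof -
    have s1: "{t0..<b} = {t0..b} - {b}" using ab by auto
    have "b1 = \<gamma> ` ({t0..b} - {b})" by (simp only: b1_def s1)
    also have "\<dots> = \<gamma> ` {t0..b} - \<gamma> ` {b}" by (rule inj_on_image_set_diff[OF inj]) (use ab in auto)
    finally show ?thesis using a1 by simp
  qed
  have e2: "b2 = path_image g2 - {pathfinish g2}"
  proof -
    have s1: "{a<..t0} = {a..t0} - {a}" using ab by auto
    have "b2 = \<gamma> ` ({a..t0} - {a})" by (simp only: b2_def s1)
    also have "\<dots> = \<gamma> ` {a..t0} - \<gamma> ` {a}" by (rule inj_on_image_set_diff[OF inj]) (use ab in auto)
    finally show ?thesis using a2 by simp
  qed
  have int: "path_image g1 \<inter> path_image g2 = {\<gamma> t0}"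
  proof -
    have "\<gamma> ` {t0..b} \<inter> \<gamma> ` {a..t0} = \<gamma> ` ({t0..b} \<inter> {a..t0})"
      using inj_on_image_Int[OF inj, of "{t0..b}" "{a..t0}"] ab by auto
    also have "{t0..b} \<inter> {a..t0} = {t0}" using ab by auto
    finally show ?thesis using a1 a2 by simp
  qed
  have ne: "b1 \<noteq> b2"
  proof
    assume "b1 = b2"
    moreover have "\<gamma> ((t0+b)/2) \<in> b1" using ab unfolding b1_def by auto
    ultimately obtain s where s: "s \<in> {a<..t0}" "\<gamma> ((t0+b)/2) = \<gamma> s" unfolding b2_def by auto
    then have "(t0+b)/2 = s" using inj ab by (auto dest: inj_onD)
    then show False using s ab by auto
  qed
  define G where "G = (\<lambda>B. if B = b1 then g1 else g2)"
  have osb: "open_star_branches (\<gamma> t0) {b1, b2}"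
    unfolding open_star_branches_def
  proof (intro conjI exI[of _ G])
    show "finite {b1,b2}" by simp
    show "\<forall>B\<in>{b1,b2}. arc (G B) \<and> pathstart (G B) = \<gamma> t0 \<and> B = path_image (G B) - {pathfinish (G B)}"
      using ne a1(1,3) a2(1,3) e1 e2 by (simp add: G_def)
    show "\<forall>B\<in>{b1,b2}. \<forall>B'\<in>{b1,b2}. B \<noteq> B' \<longrightarrow> path_image (G B) \<inter> path_image (G B') = {\<gamma> t0}"
      using ne int by (simp add: G_def Int_commute)
  qed
  have "\<gamma> ` {a<..<b} = b1 \<union> b2"
    unfolding b1_def b2_def image_Un[symmetric] using ab by (intro arg_cong[where f="image \<gamma>"]) auto
  then show ?thesis unfolding is_open_star_def using osb ne
    by (intro exI[of _ "{b1,b2}"]) auto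
qed

lemma ord_le_mono: "ord_le X x m \<Longrightarrow> m \<le> k \<Longrightarrow> ord_le X x k"
  unfolding ord_le_def by (meson le_trans)

lemma frontier_interval:
  fixes \<gamma> :: "real \<Rightarrow> 'a::metric_space"
  assumes arc: "arc \<gamma>" and sub: "\<gamma> ` {0..1} \<subseteq> \<Gamma>" and cd: "0 \<le> c" "c < d" "d \<le> 1"
    and op: "openin (top_of_set \<Gamma>) (\<gamma> ` {c<..<d})"
  shows "(top_of_set \<Gamma>) frontier_of (\<gamma> ` {c<..<d}) \<subseteq> {\<gamma> c, \<gamma> d}"
proof -
  have ci: "continuous_on {0..1} \<gamma>" using arc arc_imp_path path_def by blast
  have s1: "{c..d} \<subseteq> {0..1}" using cd by auto
  have "compact (\<gamma> ` {c..d})"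
    by (rule compact_continuous_image[OF continuous_on_subset[OF ci s1]]) simp
  then have "closed (\<gamma> ` {c..d})" by (rule compact_imp_closed)
  moreover have "\<gamma> ` {c..d} \<subseteq> \<Gamma>" using sub s1 by blast
  ultimately have cl: "closedin (top_of_set \<Gamma>) (\<gamma> ` {c..d})" by (intro closed_subset)
  have VS: "\<gamma> ` {c<..<d} \<subseteq> \<gamma> ` {c..d}" by (intro image_mono) auto
  have C: "(top_of_set \<Gamma>) closure_of (\<gamma> ` {c<..<d}) \<subseteq> \<gamma> ` {c..d}"
    by (rule closure_of_minimal[OF VS cl])
  have I: "(top_of_set \<Gamma>) interior_of (\<gamma> ` {c<..<d}) = \<gamma> ` {c<..<d}"
    by (rule interior_of_eq[THEN iffD2, OF op])
  have "(top_of_set \<Gamma>) frontier_of (\<gamma> ` {c<..<d}) \<subseteq> \<gamma> ` {c..d} - \<gamma> ` {c<..<d}"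
    unfolding frontier_of_def I by (rule Diff_mono[OF C order_refl])
  also have "\<dots> \<subseteq> {\<gamma> c, \<gamma> d}"
  proof
    fix z assume z: "z \<in> \<gamma> ` {c..d} - \<gamma> ` {c<..<d}"
    then obtain s where s: "s \<in> {c..d}" "z = \<gamma> s" by blast
    have "s \<notin> {c<..<d}" using z s by blast
    then have "s = c \<or> s = d" using s(1) by auto
    then show "z \<in> {\<gamma> c, \<gamma> d}" using s(2) by blast
  qed
  finally show ?thesis .
qed

lemma le2_lemma:
  fixes \<gamma> :: "real \<Rightarrow> 'a::metric_space"
  assumes arc: "arc \<gamma>" and sub: "\<gamma> ` {0..1} \<subseteq> \<Gamma>" and t: "0 < t0" "t0 < 1"
    and op: "\<And>c d. 0 < c \<Longrightarrow> c < d \<Longrightarrow> d < 1 \<Longrightarrow> openin (top_of_set \<Gamma>) (\<gamma> ` {c<..<d})"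
  shows "ord_le \<Gamma> (\<gamma> t0) 2"
  unfolding ord_le_def
proof (intro allI impI, elim conjE)
  fix U assume U: "openin (top_of_set \<Gamma>) U" "\<gamma> t0 \<in> U"
  obtain Ov where Ov: "open Ov" "U = \<Gamma> \<inter> Ov" using U(1) unfolding openin_open by blast
  have "\<gamma> t0 \<in> Ov" using U(2) Ov(2) by simp
  from small_interval[OF arc t Ov(1) this]
  obtain e where e: "e > 0" "0 < t0 - e" "t0 + e < 1" "\<gamma> ` {t0-e..t0+e} \<subseteq> Ov"
    by (elim exE conjE) simp
  define V where "V = \<gamma> ` {t0-e<..<t0+e}"
  have oV: "openin (top_of_set \<Gamma>) V" unfolding V_def using e by (intro op) simp_all
  have yV: "\<gamma> t0 \<in> V" unfolding V_def using e(1) by simp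
  have VS: "V \<subseteq> \<gamma> ` {t0-e..t0+e}" unfolding V_def by (intro image_mono) auto
  have "{t0-e..t0+e} \<subseteq> {0..1}" using e by auto
  then have VG: "V \<subseteq> \<Gamma>" using VS sub by blast
  have "V \<subseteq> \<Gamma> \<inter> Ov" using VS VG e(4) by blast
  then have VU: "V \<subseteq> U" using Ov(2) by simp
  have F: "(top_of_set \<Gamma>) frontier_of V \<subseteq> {\<gamma> (t0-e), \<gamma> (t0+e)}"
    unfolding V_def using e oV[unfolded V_def] by (intro frontier_interval[OF arc sub]) simp_all
  have fin: "finite ((top_of_set \<Gamma>) frontier_of V)" using F finite_subset by blast
  have "card ((top_of_set \<Gamma>) frontier_of V) \<le> card {\<gamma> (t0-e), \<gamma> (t0+e)}"
    using F by (intro card_mono) simp_all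
  also have "\<dots> \<le> 2" by (simp add: card_insert_if)
  finally have "card ((top_of_set \<Gamma>) frontier_of V) \<le> 2" .
  then show "\<exists>V. openin (top_of_set \<Gamma>) V \<and> \<gamma> t0 \<in> V \<and> V \<subseteq> U \<and>
        finite (top_of_set \<Gamma> frontier_of V) \<and> card (top_of_set \<Gamma> frontier_of V) \<le> 2"
    using oV yV VU fin by blast
qed

lemma not1_lemma:
  fixes \<gamma> :: "real \<Rightarrow> 'a::metric_space"
  assumes arc: "arc \<gamma>" and sub: "\<gamma> ` {0..1} \<subseteq> \<Gamma>" and t: "0 < t0" "t0 < 1"
    and op: "\<And>c d. 0 < c \<Longrightarrow> c < d \<Longrightarrow> d < 1 \<Longrightarrow> openin (top_of_set \<Gamma>) (\<gamma> ` {c<..<d})"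
  shows "\<not> ord_le \<Gamma> (\<gamma> t0) 1"
proof
  assume H: "ord_le \<Gamma> (\<gamma> t0) 1"
  have ci: "continuous_on {0..1} \<gamma>" using arc arc_imp_path path_def by blast
  have inj: "inj_on \<gamma> {0..1}" using arc arc_imp_inj_on by blast
  have con: "connectedin (top_of_set \<Gamma>) (\<gamma> ` {c..d})" if "0 \<le> c" "c \<le> d" "d \<le> 1" for c d
    unfolding connectedin_subtopology connectedin_iff_connected
  proof
    have s1: "{c..d} \<subseteq> {0..1}" using that by auto
    show "connected (\<gamma> ` {c..d})"
      by (rule connected_continuous_image[OF continuous_on_subset[OF ci s1]]) simp
    show "\<gamma> ` {c..d} \<subseteq> \<Gamma>" using sub s1 by blast
  qed
  define e where "e = min (t0/2) ((1-t0)/2)"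
  define a where "a = t0 - e"
  define b where "b = t0 + e"
  have e: "e > 0" "2*e \<le> t0" "2*e \<le> 1-t0" unfolding e_def min_def using t by auto
  have ab: "0 < a" "a < t0" "t0 < b" "b < 1" using e t unfolding a_def b_def by linarith+
  have oS: "openin (top_of_set \<Gamma>) (\<gamma> ` {a<..<b})" using ab by (intro op) simp_all
  have yS: "\<gamma> t0 \<in> \<gamma> ` {a<..<b}" using ab by simp
  obtain V where V: "openin (top_of_set \<Gamma>) V" "\<gamma> t0 \<in> V" "V \<subseteq> \<gamma> ` {a<..<b}"
     "finite ((top_of_set \<Gamma>) frontier_of V)" "card ((top_of_set \<Gamma>) frontier_of V) \<le> 1"
    using H[unfolded ord_le_def, rule_format, OF conjI[OF oS yS]] by blast
  have intV: "(top_of_set \<Gamma>) interior_of V = V" by (rule interior_of_eq[THEN iffD2, OF V(1)])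
  have notV: "\<gamma> s \<notin> V" if "s \<in> {0..1}" "s \<notin> {a<..<b}" for s
  proof
    assume "\<gamma> s \<in> V"
    then obtain r where r: "r \<in> {a<..<b}" "\<gamma> s = \<gamma> r" using V(3) by blast
    have "r \<in> {0..1}" using r(1) ab by auto
    then have "s = r" using inj_onD[OF inj r(2) that(1)] by simp
    then show False using that r by simp
  qed
  have "\<gamma> ` {t0..b} \<inter> (top_of_set \<Gamma>) frontier_of V \<noteq> {}"
  proof (rule connectedin_Int_frontier_of)
    show "connectedin (top_of_set \<Gamma>) (\<gamma> ` {t0..b})" using ab by (intro con) simp_all
    have "\<gamma> t0 \<in> \<gamma> ` {t0..b}" using ab by simp
    then show "\<gamma> ` {t0..b} \<inter> V \<noteq> {}" using V(2) by blast
    have "\<gamma> b \<notin> V" using ab by (intro notV) simp_all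
    moreover have "\<gamma> b \<in> \<gamma> ` {t0..b}" using ab by simp
    ultimately show "\<gamma> ` {t0..b} - V \<noteq> {}" by blast
  qed
  then obtain p1 where p1: "p1 \<in> {t0..b}" "\<gamma> p1 \<in> (top_of_set \<Gamma>) frontier_of V" by blast
  have "\<gamma> ` {a..t0} \<inter> (top_of_set \<Gamma>) frontier_of V \<noteq> {}"
  proof (rule connectedin_Int_frontier_of)
    show "connectedin (top_of_set \<Gamma>) (\<gamma> ` {a..t0})" using ab by (intro con) simp_all
    have "\<gamma> t0 \<in> \<gamma> ` {a..t0}" using ab by simp
    then show "\<gamma> ` {a..t0} \<inter> V \<noteq> {}" using V(2) by blast
    have "\<gamma> a \<notin> V" using ab by (intro notV) simp_all
    moreover have "\<gamma> a \<in> \<gamma> ` {a..t0}" using ab by simp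
    ultimately show "\<gamma> ` {a..t0} - V \<noteq> {}" by blast
  qed
  then obtain p2 where p2: "p2 \<in> {a..t0}" "\<gamma> p2 \<in> (top_of_set \<Gamma>) frontier_of V" by blast
  have "\<gamma> p1 \<notin> V" using p1(2) unfolding frontier_of_def intV by blast
  then have n1: "p1 \<noteq> t0" using V(2) by blast
  have "\<gamma> p2 \<notin> V" using p2(2) unfolding frontier_of_def intV by blast
  then have n2: "p2 \<noteq> t0" using V(2) by blast
  have "p2 < p1" using p1(1) p2(1) n1 n2 by simp
  moreover have "p1 \<in> {0..1}" "p2 \<in> {0..1}" using p1(1) p2(1) ab by auto
  ultimately have ne: "\<gamma> p1 \<noteq> \<gamma> p2" using inj_onD[OF inj] by force
  have "card {\<gamma> p1, \<gamma> p2} \<le> card ((top_of_set \<Gamma>) frontier_of V)"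
    using p1(2) p2(2) V(4) by (intro card_mono) simp_all
  then show False using V(5) ne by simp
qed

lemma order2:
  fixes \<gamma> :: "real \<Rightarrow> 'a::metric_space"
  assumes arc: "arc \<gamma>" and sub: "\<gamma> ` {0..1} \<subseteq> \<Gamma>" and t: "0 < t0" "t0 < 1"
    and op: "\<And>c d. 0 < c \<Longrightarrow> c < d \<Longrightarrow> d < 1 \<Longrightarrow> openin (top_of_set \<Gamma>) (\<gamma> ` {c<..<d})"
  shows "point_order \<Gamma> (\<gamma> t0) 2"
proof -
  have le2: "ord_le \<Gamma> (\<gamma> t0) 2" by (rule le2_lemma[OF arc sub t op])
  have not1: "\<not> ord_le \<Gamma> (\<gamma> t0) 1" by (rule not1_lemma[OF arc sub t op])
  have not0: "\<not> ord_le \<Gamma> (\<gamma> t0) 0"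
  proof
    assume "ord_le \<Gamma> (\<gamma> t0) 0"
    then have "ord_le \<Gamma> (\<gamma> t0) 1" by (rule ord_le_mono) simp
    then show False using not1 by blast
  qed
  show ?thesis unfolding point_order_def
  proof (intro conjI allI impI)
    show "ord_le \<Gamma> (\<gamma> t0) 2" by (rule le2)
    fix m :: nat assume "m < 2"
    then have "m = 0 \<or> m = 1" by auto
    then show "\<not> ord_le \<Gamma> (\<gamma> t0) m" using not0 not1 by blast
  qed
qed

lemma graph_good:
  fixes \<Gamma> :: "'a::metric_space set"
  assumes gr: "is_graph \<Gamma>" and oV: "openin (top_of_set \<Gamma>) V" and ne: "V \<noteq> {}"
  shows "\<exists>y S. y \<in> S \<and> S \<subseteq> V \<and> openin (top_of_set \<Gamma>) S \<and> is_open_star y 2 S \<and> point_order \<Gamma> y 2"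
proof -
  obtain n and g :: "nat \<Rightarrow> real \<Rightarrow> 'a" where arcs: "\<forall>i<n. arc (g i)" and G: "\<Gamma> = (\<Union>i<n. path_image (g i))"
   and P: "\<forall>i<n. \<forall>j<n. i \<noteq> j \<longrightarrow> path_image (g i) \<inter> path_image (g j) \<subseteq> {pathstart (g i), pathfinish (g i)} \<inter> {pathstart (g j), pathfinish (g j)}"
    using gr unfolding is_graph_def by blast
  obtain v where v: "v \<in> V" using ne by blast
  have VG: "V \<subseteq> \<Gamma>" using oV by (rule openin_imp_subset)
  then obtain i where i: "i < n" "v \<in> path_image (g i)" using v G by blast
  define \<gamma> where "\<gamma> = g i"
  have arc: "arc \<gamma>" using arcs i \<gamma>_def by blast
  have ci: "continuous_on {0..1} \<gamma>" using arc arc_imp_path path_def by blast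
  have sub: "\<gamma> ` {0..1} \<subseteq> \<Gamma>" using G i unfolding \<gamma>_def path_image_def by blast
  have op: "openin (top_of_set \<Gamma>) (\<gamma> ` {c<..<d})" if "0 < c" "c < d" "d < 1" for c d
    unfolding \<gamma>_def by (rule arc_interior_open[OF arcs G P i(1) that])
  obtain s where s: "s \<in> {0..1}" "v = \<gamma> s" using i(2) unfolding \<gamma>_def path_image_def by blast
  obtain Ov where Ov: "open Ov" "V = \<Gamma> \<inter> Ov" using oV unfolding openin_open by blast
  have "openin (top_of_set {0..1}) ({0..1} \<inter> \<gamma> -` Ov)"
    by (rule continuous_openin_preimage_gen[OF ci Ov(1)])
  moreover have "s \<in> {0..1} \<inter> \<gamma> -` Ov" using s v Ov(2) by blast
  ultimately obtain r where r: "r > 0" "\<forall>x'\<in>{0..1}. dist x' s < r \<longrightarrow> x' \<in> {0..1} \<inter> \<gamma> -` Ov"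
    unfolding openin_euclidean_subtopology_iff by blast
  define t0 where "t0 = (if s \<le> 1/2 then s + min (r/2) (1/4) else s - min (r/2) (1/4))"
  have mr: "min (r/2) (1/4) > 0" "min (r/2) (1/4) < r" "min (r/2) (1/4) \<le> 1/4" using r(1) by auto
  have t: "0 < t0" "t0 < 1" using s(1) mr unfolding t0_def by auto
  have "dist t0 s < r" using mr unfolding t0_def dist_real_def by auto
  then have "\<gamma> t0 \<in> Ov" using r(2) t by auto
  from small_interval[OF arc t Ov(1) this]
  obtain e where e: "e > 0" "0 < t0 - e" "t0 + e < 1" "\<gamma> ` {t0-e..t0+e} \<subseteq> Ov"
    by (elim exE conjE) simp
  define S where "S = \<gamma> ` {t0-e<..<t0+e}"
  have SS: "S \<subseteq> \<gamma> ` {t0-e..t0+e}" unfolding S_def by (intro image_mono) auto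
  have "{t0-e..t0+e} \<subseteq> {0..1}" using e by auto
  then have "S \<subseteq> \<Gamma>" using SS sub by blast
  then have SV: "S \<subseteq> V" using SS e(4) Ov(2) by blast
  have oS: "openin (top_of_set \<Gamma>) S" unfolding S_def using e by (intro op) simp_all
  have yS: "\<gamma> t0 \<in> S" unfolding S_def using e(1) by simp
  have st: "is_open_star (\<gamma> t0) 2 S" unfolding S_def using e by (intro star2[OF arc]) simp_all
  have po: "point_order \<Gamma> (\<gamma> t0) 2" by (rule order2[OF arc sub t op])
  show ?thesis using yS SV oS st po by blast
qed

lemma ssl_prod:
  assumes oO: "openin (top_of_set U) Ob" and b0: "b0 \<in> Ob" and SG: "S \<subseteq> \<Gamma>"
    and oS: "openin (top_of_set \<Gamma>) S" and yS: "y \<in> S" and st: "is_open_star y 2 S"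
    and po: "point_order \<Gamma> y 2" and OM: "Ob \<times> S \<subseteq> M'"
  shows "ssl_point U \<Gamma> M' (b0, y)"
proof -
  have fs: "full_substar y 2 S S" using st unfolding is_open_star_def full_substar_def by blast
  have G: "M' \<inter> (Ob \<times> S) = Ob \<times> S" using OM by blast
  have G1: "(Ob \<times> S) \<inter> ({b0} \<times> \<Gamma>) = {b0} \<times> S" using b0 SG by blast
  have G2: "\<forall>z \<in> fst ` (Ob \<times> S). (Ob \<times> S) \<inter> ({z} \<times> \<Gamma>) = {z} \<times> S" using SG by auto
  have H: "\<exists>k Sk. k \<ge> 2 \<and> full_substar y k Sk S \<and> (Ob \<times> S) \<inter> ({b0} \<times> \<Gamma>) = {b0} \<times> Sk \<and>
     (\<forall>z \<in> fst ` (Ob \<times> S). \<exists>kz Sz. 2 \<le> kz \<and> kz \<le> k \<and> full_substar y kz Sz Sk \<and>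
        (Ob \<times> S) \<inter> ({z} \<times> \<Gamma>) = {z} \<times> Sz)"
    apply (rule exI[of _ "2::nat"], rule exI[of _ S])
    using fs G1 G2 by blast
  have mem: "(b0, y) \<in> M'" using OM b0 yS by blast
  show ?thesis
    unfolding ssl_point_def Let_def fst_conv snd_conv
  proof (intro conjI exI[of _ "2::nat"])
    show "(b0, y) \<in> M'" by (rule mem)
    show "2 \<le> (2::nat)" by simp
    show "point_order \<Gamma> y 2" by (rule po)
    show "\<exists>Oba \<Sigma>N. openin (top_of_set U) Oba \<and> b0 \<in> Oba \<and> \<Sigma>N \<subseteq> \<Gamma> \<and> openin (top_of_set \<Gamma>) \<Sigma>N \<and>
        y \<in> \<Sigma>N \<and> is_open_star y 2 \<Sigma>N \<and>
        (\<exists>k \<Sigma>k. 2 \<le> k \<and> full_substar y k \<Sigma>k \<Sigma>N \<and>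
           M' \<inter> (Oba \<times> \<Sigma>N) \<inter> ({b0} \<times> \<Gamma>) = {b0} \<times> \<Sigma>k \<and>
           (\<forall>z\<in>fst ` (M' \<inter> (Oba \<times> \<Sigma>N)). \<exists>kz \<Sigma>z. 2 \<le> kz \<and> kz \<le> k \<and> full_substar y kz \<Sigma>z \<Sigma>k \<and>
              M' \<inter> (Oba \<times> \<Sigma>N) \<inter> ({z} \<times> \<Gamma>) = {z} \<times> \<Sigma>z))"
      apply (rule exI[of _ Ob], rule exI[of _ S])
      unfolding G using oO b0 SG oS yS st H by blast
  qed
qed

theorem lemma9:
  fixes E :: "'e::metric_space set" and B :: "'b::metric_space set"
    and p :: "'e \<Rightarrow> 'b" and \<Gamma> :: "'g::metric_space set" and M :: "'e set"
  assumes "compact_graph_bundle E B p \<Gamma>"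
    and "M \<subseteq> E" and "compact M"
    and "End_s E B p \<Gamma> M = M"
  shows "nowhere_dense_in E M"
proof -
  have gr: "is_graph \<Gamma>" and pE: "p ` E = B"
    and charts: "\<forall>b\<in>B. \<exists>U h. b \<in> U \<and> bundle_chart E B p \<Gamma> U h"
    using assms(1) unfolding compact_graph_bundle_def by blast+
  have "closedin (top_of_set E) M"
    by (rule closed_subset[OF assms(2) compact_imp_closed[OF assms(3)]])
  then have clM: "(top_of_set E) closure_of M = M" by (rule closure_of_closedin)
  show ?thesis
    unfolding nowhere_dense_in_def clM
  proof (rule ccontr)
    assume "(top_of_set E) interior_of M \<noteq> {}"
    then obtain w where w: "w \<in> (top_of_set E) interior_of M" by blast
    define W where "W = (top_of_set E) interior_of M"
    have oW: "openin (top_of_set E) W" unfolding W_def by (rule openin_interior_of)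
    have WM: "W \<subseteq> M" unfolding W_def by (rule interior_of_subset)
    have wW: "w \<in> W" using w W_def by simp
    have wE: "w \<in> E" using wW WM assms(2) by blast
    then have "p w \<in> B" using pE by blast
    then obtain U h where U: "p w \<in> U" "bundle_chart E B p \<Gamma> U h" using charts by blast
    have oU: "openin (top_of_set B) U" using U(2) unfolding bundle_chart_def by blast
    obtain k where hom: "homeomorphism (E \<inter> p -` U) (U \<times> \<Gamma>) h k"
      using U(2) unfolding bundle_chart_def by blast
    define D where "D = E \<inter> p -` U"
    obtain T where T: "open T" "W = E \<inter> T" using oW unfolding openin_open by blast
    have "W \<inter> D = D \<inter> T" unfolding D_def T(2) by blast
    then have "openin (top_of_set D) (W \<inter> D)" using T(1) by (simp add: openin_open_Int)
    then have hW: "openin (top_of_set (U \<times> \<Gamma>)) (h ` (W \<inter> D))"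
      using homeomorphism_imp_open_map[OF hom] unfolding D_def by blast
    have wD: "w \<in> W \<inter> D" using wW wE U(1) unfolding D_def by blast
    then have "(fst (h w), snd (h w)) \<in> h ` (W \<inter> D)" by simp
    from Times_in_interior_subtopology[OF this hW]
    obtain Ob V where ObV: "openin (top_of_set U) Ob" "fst (h w) \<in> Ob"
      "openin (top_of_set \<Gamma>) V" "snd (h w) \<in> V" "Ob \<times> V \<subseteq> h ` (W \<inter> D)" by blast
    have "V \<noteq> {}" using ObV(4) by blast
    from graph_good[OF gr ObV(3) this]
    obtain y S where yS: "y \<in> S" "S \<subseteq> V" "openin (top_of_set \<Gamma>) S" "is_open_star y 2 S"
      "point_order \<Gamma> y 2" by blast
    define b0 where "b0 = fst (h w)"
    have "(b0, y) \<in> h ` (W \<inter> D)" using ObV(2,5) yS(1,2) unfolding b0_def by blast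
    then obtain x where x: "x \<in> W \<inter> D" "h x = (b0, y)" by (metis imageE)
    have xM: "x \<in> M" using x(1) WM by blast
    have pxU: "p x \<in> U" using x(1) unfolding D_def by blast
    have SG: "S \<subseteq> \<Gamma>" using yS(3) by (rule openin_imp_subset)
    have "Ob \<times> S \<subseteq> h ` (W \<inter> D)" using ObV(5) yS(2) by blast
    also have "\<dots> \<subseteq> h ` (M \<inter> p -` U)" by (rule image_mono) (use WM in \<open>auto simp: D_def\<close>)
    finally have OM: "Ob \<times> S \<subseteq> h ` (M \<inter> p -` U)" .
    have "ssl_point U \<Gamma> (h ` (M \<inter> p -` U)) (b0, y)"
      by (rule ssl_prod[OF ObV(1) _ SG yS(3) yS(1) yS(4) yS(5) OM]) (use ObV(2) b0_def in simp)
    then have "p x \<in> U \<and> bundle_chart E B p \<Gamma> U h \<and> ssl_point U \<Gamma> (h ` (M \<inter> p -` U)) (h x)"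
      using pxU U(2) x(2) by simp
    then have "x \<in> Lint_s E B p \<Gamma> M"
      unfolding Lint_s_def using xM by blast
    moreover have "x \<in> End_s E B p \<Gamma> M" using assms(4) xM by simp
    then have "x \<notin> Lint_s E B p \<Gamma> M" unfolding End_s_def by simp
    ultimately show False by blast
  qed
qed

end
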